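(* Let $\Sigma\subset\mathbb G$ be a regular surface. At every non-characteristic point of $\Sigma$, the Riemannian mean curvature $\mathcal H_L$ of $\Sigma$ in $(\mathbb G,g_L)$ satisfies $$\lim_{L\to+\infty}\mathcal H_L=X_1(\bar p)+X_2(\bar q)-\bar p.$$
   Context: $\mathbb G=(0,\infty)\times\mathbb R^2$ is the affine group with coordinates $(x_1,x_2,x_3)$ and law $(a,b,c)\star(x,y,z)=(ax,ay+b,z+c)$. Let $X_1=x_1\partial_{x_1}$, $X_2=x_1\partial_{x_2}+\partial_{x_3}$, $X_3=x_1\partial_{x_2}$, with dual forms $\omega_1=x_1^{-1}dx_1$, $\omega_2=dx_3$, $\omega=x_1^{-1}dx_2-dx_3$. For $L>0$, $g_L=\omega_1\otimes\omega_1+\omega_2\otimes\omega_2+L\,\omega\otimes\omega$ (so $X_1,X_2,\widetilde X_3:=L^{-1/2}X_3$ is orthonormal) and $\nabla^L$ is its Levi-Civita connection. A regular surface is a Euclidean $C^2$-smooth compact oriented surface $\Sigma=\{u=0\}$ with $u:\mathbb G\to\mathbb R$ Euclidean $C^2$ and $(u_{x_1},u_{x_2},u_{x_3})\ne0$. Put $p=X_1u$, $q=X_2u$, $r=\widetilde X_3u$, $l=\sqrt{p^2+q^2}$, $l_L=\sqrt{p^2+q^2+r^2}$, $\bar p=p/l$, $\bar q=q/l$, $\bar p_L=p/l_L$, $\bar q_L=q/l_L$, $\bar r_L=r/l_L$. A point is non-characteristic if $l\ne0$. There, $v_L=\bar p_LX_1+\bar q_LX_2+\bar r_L\widetilde X_3$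 is the unit normal, and $e_1=\bar qX_1-\bar pX_2$, $e_2=\bar r_L\bar pX_1+\bar r_L\bar qX_2-\frac{l}{l_L}\widetilde X_3$ is an orthonormal tangent frame. The mean curvature is $\mathcal H_L=\langle\nabla^L_{e_1}v_L,e_1\rangle_L+\langle\nabla^L_{e_2}v_L,e_2\rangle_L$ (trace of the second fundamental form $(\langle\nabla^L_{e_i}v_L,e_j\rangle_L)_{i,j}$). *)

theory Defs
  imports "HOL-Analysis.Analysis"
begin

text \<open>Points of the affine group G = (0,inf) x R^2 are elements x of real^3 with x$1 > 0.
  Vector fields are written in Euclidean coordinates: V :: real^3 => real^3.\<close>

definition Gset :: "(real^3) set" where
  "Gset = {x. x$1 > 0}"

definition dd :: "(real^3 \<Rightarrow> 'b::real_normed_vector) \<Rightarrow> real^3 \<Rightarrow> real^3 \<Rightarrow> 'b" where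
  "dd f x v = frechet_derivative f (at x) v"

definition vfapp :: "(real^3 \<Rightarrow> real^3) \<Rightarrow> (real^3 \<Rightarrow> real) \<Rightarrow> real^3 \<Rightarrow> real" where
  "vfapp V f x = dd f x (V x)"

definition X1 :: "real^3 \<Rightarrow> real^3" where "X1 x = vector [x$1, 0, 0]"
definition X2 :: "real^3 \<Rightarrow> real^3" where "X2 x = vector [0, x$1, 1]"
definition X3 :: "real^3 \<Rightarrow> real^3" where "X3 x = vector [0, x$1, 0]"
definition X3t :: "real \<Rightarrow> real^3 \<Rightarrow> real^3" where "X3t L x = (1 / sqrt L) *\<^sub>R X3 x"

definition om1 :: "real^3 \<Rightarrow> real^3 \<Rightarrow> real" where "om1 x v = v$1 / x$1"
definition om2 :: "real^3 \<Rightarrow> real^3 \<Rightarrow> real" where "om2 x v = v$3"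
definition om :: "real^3 \<Rightarrow> real^3 \<Rightarrow> real" where "om x v = v$2 / x$1 - v$3"

definition gL :: "real \<Rightarrow> real^3 \<Rightarrow> real^3 \<Rightarrow> real^3 \<Rightarrow> real" where
  "gL L x v w = om1 x v * om1 x w + om2 x v * om2 x w + L * om x v * om x w"

definition gfield :: "real \<Rightarrow> (real^3 \<Rightarrow> real^3) \<Rightarrow> (real^3 \<Rightarrow> real^3) \<Rightarrow> real^3 \<Rightarrow> real" where
  "gfield L V W = (\<lambda>x. gL L x (V x) (W x))"

definition lie :: "(real^3 \<Rightarrow> real^3) \<Rightarrow> (real^3 \<Rightarrow> real^3) \<Rightarrow> real^3 \<Rightarrow> real^3" where
  "lie V W x = dd W x (V x) - dd V x (W x)"

text \<open>Levi-Civita connection of g_L, given through the Koszul formula: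
  LC_inner L V W Z x = g_L(nabla^L_V W, Z)(x).\<close>
definition LC_inner :: "real \<Rightarrow> (real^3 \<Rightarrow> real^3) \<Rightarrow> (real^3 \<Rightarrow> real^3) \<Rightarrow> (real^3 \<Rightarrow> real^3)
    \<Rightarrow> real^3 \<Rightarrow> real" where
  "LC_inner L V W Z x = (1/2) *
     ( vfapp V (gfield L W Z) x + vfapp W (gfield L V Z) x - vfapp Z (gfield L V W) x
     + gL L x (lie V W x) (Z x) - gL L x (lie V Z x) (W x) - gL L x (lie W Z x) (V x))"

definition pu :: "(real^3 \<Rightarrow> real) \<Rightarrow> real^3 \<Rightarrow> real" where "pu u = vfapp X1 u"
definition qu :: "(real^3 \<Rightarrow> real) \<Rightarrow> real^3 \<Rightarrow> real" where "qu u = vfapp X2 u"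
definition ru :: "real \<Rightarrow> (real^3 \<Rightarrow> real) \<Rightarrow> real^3 \<Rightarrow> real" where "ru L u = vfapp (X3t L) u"
definition lu :: "(real^3 \<Rightarrow> real) \<Rightarrow> real^3 \<Rightarrow> real" where
  "lu u x = sqrt ((pu u x)\<^sup>2 + (qu u x)\<^sup>2)"
definition lLu :: "real \<Rightarrow> (real^3 \<Rightarrow> real) \<Rightarrow> real^3 \<Rightarrow> real" where
  "lLu L u x = sqrt ((pu u x)\<^sup>2 + (qu u x)\<^sup>2 + (ru L u x)\<^sup>2)"
definition pbar :: "(real^3 \<Rightarrow> real) \<Rightarrow> real^3 \<Rightarrow> real" where "pbar u x = pu u x / lu u x"
definition qbar :: "(real^3 \<Rightarrow> real) \<Rightarrow> real^3 \<Rightarrow> real" where "qbar u x = qu u x / lu u x"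
definition pbarL :: "real \<Rightarrow> (real^3 \<Rightarrow> real) \<Rightarrow> real^3 \<Rightarrow> real" where "pbarL L u x = pu u x / lLu L u x"
definition qbarL :: "real \<Rightarrow> (real^3 \<Rightarrow> real) \<Rightarrow> real^3 \<Rightarrow> real" where "qbarL L u x = qu u x / lLu L u x"
definition rbarL :: "real \<Rightarrow> (real^3 \<Rightarrow> real) \<Rightarrow> real^3 \<Rightarrow> real" where "rbarL L u x = ru L u x / lLu L u x"

text \<open>Unit normal and orthonormal tangent frame at non-characteristic points.\<close>
definition nuL :: "real \<Rightarrow> (real^3 \<Rightarrow> real) \<Rightarrow> real^3 \<Rightarrow> real^3" where
  "nuL L u x = pbarL L u x *\<^sub>R X1 x + qbarL L u x *\<^sub>R X2 x + rbarL L u x *\<^sub>R X3t L x"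
definition e1 :: "(real^3 \<Rightarrow> real) \<Rightarrow> real^3 \<Rightarrow> real^3" where
  "e1 u x = qbar u x *\<^sub>R X1 x - pbar u x *\<^sub>R X2 x"
definition e2 :: "real \<Rightarrow> (real^3 \<Rightarrow> real) \<Rightarrow> real^3 \<Rightarrow> real^3" where
  "e2 L u x = (rbarL L u x * pbar u x) *\<^sub>R X1 x + (rbarL L u x * qbar u x) *\<^sub>R X2 x
              - (lu u x / lLu L u x) *\<^sub>R X3t L x"

text \<open>Riemannian mean curvature H_L (trace of the second fundamental form).\<close>
definition HL :: "real \<Rightarrow> (real^3 \<Rightarrow> real) \<Rightarrow> real^3 \<Rightarrow> real" where
  "HL L u x = LC_inner L (e1 u) (nuL L u) (e1 u) x + LC_inner L (e2 L u) (nuL L u) (e2 L u) x"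

definition C2_on :: "(real^3) set \<Rightarrow> (real^3 \<Rightarrow> real) \<Rightarrow> bool" where
  "C2_on S u \<longleftrightarrow> (\<exists>Du :: real^3 \<Rightarrow> ((real^3) \<Rightarrow>\<^sub>L real). \<exists>D2u :: real^3 \<Rightarrow> ((real^3) \<Rightarrow>\<^sub>L ((real^3) \<Rightarrow>\<^sub>L real)).
      (\<forall>x\<in>S. (u has_derivative blinfun_apply (Du x)) (at x)) \<and>
      (\<forall>x\<in>S. (Du has_derivative blinfun_apply (D2u x)) (at x)) \<and>
      continuous_on S D2u)"

text \<open>Regular surface Sigma = {u = 0} in G: u Euclidean C^2 on G, Euclidean gradient
  nonvanishing on Sigma, Sigma compact (orientation is given by u).\<close>
definition regular_surface :: "(real^3 \<Rightarrow> real) \<Rightarrow> bool" where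
  "regular_surface u \<longleftrightarrow> C2_on Gset u \<and>
     (\<forall>x\<in>Gset. u x = 0 \<longrightarrow> frechet_derivative u (at x) \<noteq> (\<lambda>v. 0)) \<and>
     compact {x\<in>Gset. u x = 0}"

end

theory Submission
  imports Defs "HOL-Real_Asymp.Real_Asymp"
begin


lemma X1_lin: "linear X1"
  by (rule linearI) (auto simp: X1_def vec_eq_iff forall_3 vector_3)
lemma X3_lin: "linear X3"
  by (rule linearI) (auto simp: X3_def vec_eq_iff forall_3 vector_3)
lemma X2_eq: "X2 y = X3 y + vector [0,0,1]"
  by (auto simp: X2_def X3_def vec_eq_iff forall_3 vector_3)

lemma hd_X1: "(X1 has_derivative X1) (at y)"
  using X1_lin by (simp add: bounded_linear_imp_has_derivative linear_conv_bounded_linear)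
lemma hd_X3: "(X3 has_derivative X3) (at y)"
  using X3_lin by (simp add: bounded_linear_imp_has_derivative linear_conv_bounded_linear)
lemma hd_X2: "(X2 has_derivative X3) (at y)"
proof -
  have "((\<lambda>y. X3 y + vector [0,0,1]) has_derivative X3) (at y)"
    by (intro has_derivative_add_const hd_X3)
  then show ?thesis by (simp add: X2_eq[abs_def])
qed

lemma lie_frame:
  assumes v1: "(v1 has_derivative Dv1) (at x)" and v2: "(v2 has_derivative Dv2) (at x)"
    and v3: "(v3 has_derivative Dv3) (at x)"
    and w1: "(w1 has_derivative Dw1) (at x)" and w2: "(w2 has_derivative Dw2) (at x)"
    and w3: "(w3 has_derivative Dw3) (at x)"
  defines "Vx \<equiv> v1 x *\<^sub>R X1 x + v2 x *\<^sub>R X2 x + v3 x *\<^sub>R X3 x"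
    and "Wx \<equiv> w1 x *\<^sub>R X1 x + w2 x *\<^sub>R X2 x + w3 x *\<^sub>R X3 x"
  shows "lie (\<lambda>y. v1 y *\<^sub>R X1 y + v2 y *\<^sub>R X2 y + v3 y *\<^sub>R X3 y)
             (\<lambda>y. w1 y *\<^sub>R X1 y + w2 y *\<^sub>R X2 y + w3 y *\<^sub>R X3 y) x
    = (Dw1 Vx - Dv1 Wx) *\<^sub>R X1 x + (Dw2 Vx - Dv2 Wx) *\<^sub>R X2 x
      + (Dw3 Vx - Dv3 Wx + v1 x * w2 x - v2 x * w1 x + v1 x * w3 x - v3 x * w1 x) *\<^sub>R X3 x"
proof -
  have dV: "((\<lambda>y. v1 y *\<^sub>R X1 y + v2 y *\<^sub>R X2 y + v3 y *\<^sub>R X3 y) has_derivative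
     (\<lambda>h. (v1 x *\<^sub>R X1 h + Dv1 h *\<^sub>R X1 x) + (v2 x *\<^sub>R X3 h + Dv2 h *\<^sub>R X2 x) + (v3 x *\<^sub>R X3 h + Dv3 h *\<^sub>R X3 x))) (at x)"
    by (intro has_derivative_add has_derivative_scaleR v1 v2 v3 hd_X1 hd_X2 hd_X3)
  have dW: "((\<lambda>y. w1 y *\<^sub>R X1 y + w2 y *\<^sub>R X2 y + w3 y *\<^sub>R X3 y) has_derivative
     (\<lambda>h. (w1 x *\<^sub>R X1 h + Dw1 h *\<^sub>R X1 x) + (w2 x *\<^sub>R X3 h + Dw2 h *\<^sub>R X2 x) + (w3 x *\<^sub>R X3 h + Dw3 h *\<^sub>R X3 x))) (at x)"
    by (intro has_derivative_add has_derivative_scaleR w1 w2 w3 hd_X1 hd_X2 hd_X3)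
  show ?thesis
    unfolding lie_def dd_def frechet_derivative_at[OF dV, symmetric] frechet_derivative_at[OF dW, symmetric]
    unfolding Vx_def Wx_def
    by (simp add: X1_def X2_def X3_def vec_eq_iff forall_3 vector_3 algebra_simps)
qed

lemma gL_frame:
  assumes "x$1 \<noteq> 0"
  shows "gL L x (a1 *\<^sub>R X1 x + a2 *\<^sub>R X2 x + a3 *\<^sub>R X3 x) (b1 *\<^sub>R X1 x + b2 *\<^sub>R X2 x + b3 *\<^sub>R X3 x)
     = a1 * b1 + a2 * b2 + L * a3 * b3"
  using assms by (simp add: gL_def om1_def om2_def om_def X1_def X2_def X3_def vector_3 field_simps)

lemma LC_same:
  "LC_inner L V W V x = (1/2) * vfapp W (gfield L V V) x + gL L x (lie V W x) (V x)"
proof -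
  have sym: "gfield L W V = gfield L V W" by (auto simp: gfield_def gL_def)
  have l0: "lie V V x = 0" by (simp add: lie_def)
  have l1: "lie W V x = - lie V W x" by (simp add: lie_def)
  have g0: "gL L x 0 w = 0" for w by (simp add: gL_def om1_def om2_def om_def)
  have gn: "gL L x (- v) w = - gL L x v w" for v w by (simp add: gL_def om1_def om2_def om_def field_simps)
  show ?thesis unfolding LC_inner_def sym l0 l1 g0 gn by simp
qed

lemma frechet_loc_const:
  assumes "open S" "x \<in> S" "\<And>y. y \<in> S \<Longrightarrow> f y = c"
  shows "frechet_derivative f (at x) = (\<lambda>h. 0)"
proof -
  have "(f has_derivative (\<lambda>h. 0)) (at x)"
    by (rule has_derivative_transform_within_open[OF has_derivative_const[of c] assms(1,2)]) (simp add: assms(3))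
  then show ?thesis by (metis frechet_derivative_at)
qed



lemma hd_div:
  fixes f g :: "real^3 \<Rightarrow> real"
  assumes "(f has_derivative F) (at x)" "(g has_derivative G) (at x)" "g x \<noteq> 0"
  shows "((\<lambda>y. f y / g y) has_derivative (\<lambda>h. F h / g x - f x * G h / (g x)^2)) (at x)"
  by (rule has_derivative_eq_rhs[OF has_derivative_divide[OF assms]])
     (use assms(3) in \<open>auto simp: fun_eq_iff field_simps power2_eq_square\<close>)

lemma hd_sqrt3:
  fixes f g k :: "real^3 \<Rightarrow> real"
  assumes "(f has_derivative F) (at x)" "(g has_derivative G) (at x)" "(k has_derivative K) (at x)"
    "f x ^ 2 + g x ^ 2 + k x ^ 2 > 0"
  shows "((\<lambda>y. sqrt (f y ^ 2 + g y ^ 2 + k y ^ 2)) has_derivative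
     (\<lambda>h. (f x * F h + g x * G h + k x * K h) / sqrt (f x ^ 2 + g x ^ 2 + k x ^ 2))) (at x)"
proof -
  have d: "((\<lambda>y. f y * f y + g y * g y + k y * k y) has_derivative
     (\<lambda>h. (f x * F h + F h * f x) + (g x * G h + G h * g x) + (k x * K h + K h * k x))) (at x)"
    by (intro has_derivative_add has_derivative_mult assms(1-3))
  have "((\<lambda>y. sqrt (f y * f y + g y * g y + k y * k y)) has_derivative
     (\<lambda>h. ((f x * F h + F h * f x) + (g x * G h + G h * g x) + (k x * K h + K h * k x)) *
        (inverse (sqrt (f x * f x + g x * g x + k x * k x)) / 2))) (at x)"
    by (rule has_derivative_real_sqrt[OF _ d]) (use assms(4) in \<open>simp add: power2_eq_square\<close>)
  then show ?thesis unfolding power2_eq_square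
    by (rule has_derivative_eq_rhs) (auto simp: fun_eq_iff divide_simps algebra_simps)
qed

lemma hd_sqrt2:
  fixes f g :: "real^3 \<Rightarrow> real"
  assumes "(f has_derivative F) (at x)" "(g has_derivative G) (at x)"
    "f x ^ 2 + g x ^ 2 > 0"
  shows "((\<lambda>y. sqrt (f y ^ 2 + g y ^ 2)) has_derivative
     (\<lambda>h. (f x * F h + g x * G h) / sqrt (f x ^ 2 + g x ^ 2))) (at x)"
  using hd_sqrt3[OF assms(1,2) has_derivative_const[of 0]] assms(3) by simp

lemma lin3:
  fixes f :: "real^3 \<Rightarrow> real"
  assumes "bounded_linear f"
  shows "f (a *\<^sub>R u + b *\<^sub>R v + c *\<^sub>R w) = a * f u + b * f v + c * f w"
proof -
  interpret bounded_linear f by fact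
  show ?thesis by (simp add: add scale)
qed

lemma s_lim: "((\<lambda>L::real. 1 / sqrt L) \<longlongrightarrow> 0) at_top"
  by real_asymp



lemma abD_alg:
  fixes p q l A B :: real
  assumes "l \<noteq> 0" "l^2 = p^2 + q^2"
  shows "(p/l) * (A/l - p*((p*A+q*B)/l)/l^2) + (q/l) * (B/l - q*((p*A+q*B)/l)/l^2) = 0"
proof -
  have "(p/l) * (A/l - p*((p*A+q*B)/l)/l^2) + (q/l) * (B/l - q*((p*A+q*B)/l)/l^2)
     = (p*A+q*B) * (l^2 - (p^2+q^2)) / l^4"
    using assms(1) by (simp add: field_simps power2_eq_square power4_eq_xxxx)
  with assms(2) show ?thesis by simp
qed

lemma l_alg:
  fixes L s X Y R a Q b P m :: real
  assumes "L * (s * s) = 1" "a * Q = b * P"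
  shows "L * (s * X - - (Y * s) + R * a * Q - R * b * P + R * a * (s * R) - - (m * s) * P) * - (m * s)
    = - (m * (X + Y + R * R * a + m * P))"
proof -
  have "L * (s * X - - (Y * s) + R * a * Q - R * b * P + R * a * (s * R) - - (m * s) * P) * - (m * s)
    = - (L * (s * s)) * (m * (X + Y + R * R * a + m * P)) - L * s * m * R * (a * Q - b * P)"
    by (simp add: algebra_simps)
  then show ?thesis using assms by simp
qed

lemma ab1_gen:
  assumes "lu u y \<noteq> 0"
  shows "(pbar u y)^2 + (qbar u y)^2 = 1"
proof -
  have "(pu u y)^2 + (qu u y)^2 \<noteq> 0" using assms by (auto simp: lu_def)
  moreover have "lu u y ^ 2 = (pu u y)^2 + (qu u y)^2" by (simp add: lu_def)
  ultimately show ?thesis using assms by (auto simp: pbar_def qbar_def power_divide add_divide_distrib[symmetric])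
qed

lemma e2_norm_gen:
  assumes "lu u y \<noteq> 0" "L > 0"
  shows "(rbarL L u y * pbar u y)^2 + (rbarL L u y * qbar u y)^2 + L * (lu u y / lLu L u y * (1 / sqrt L))^2 = 1"
proof -
  have pq: "(pu u y)^2 + (qu u y)^2 > 0"
  proof -
    have "(pu u y)^2 + (qu u y)^2 \<noteq> 0" using assms by (auto simp: lu_def)
    moreover have "(pu u y)^2 + (qu u y)^2 \<ge> 0" by simp
    ultimately show ?thesis by linarith
  qed
  have l2: "lu u y ^ 2 = (pu u y)^2 + (qu u y)^2" by (simp add: lu_def)
  have lL2: "lLu L u y ^ 2 = (pu u y)^2 + (qu u y)^2 + (ru L u y)^2"
    by (simp add: lLu_def add_nonneg_nonneg)
  have lLp: "lLu L u y ^ 2 > 0" using pq lL2 by (simp add: add_pos_nonneg)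
  have Ls: "L * (1 / sqrt L)^2 = 1" using assms(2) by (simp add: power_divide)
  have "(rbarL L u y * pbar u y)^2 + (rbarL L u y * qbar u y)^2 + L * (lu u y / lLu L u y * (1 / sqrt L))^2
     = (rbarL L u y)^2 * ((pbar u y)^2 + (qbar u y)^2) + (lu u y / lLu L u y)^2 * (L * (1 / sqrt L)^2)"
    by (simp add: power_mult_distrib power_divide algebra_simps)
  also have "\<dots> = (rbarL L u y)^2 + (lu u y / lLu L u y)^2"
    using ab1_gen[OF assms(1)] Ls by simp
  also have "\<dots> = ((ru L u y)^2 + lu u y ^ 2) / lLu L u y ^ 2"
    by (simp add: rbarL_def power_divide add_divide_distrib)
  also have "\<dots> = 1" using l2 lL2 lLp by simp
  finally show ?thesis .
qed

lemma fin_alg: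
  fixes a b A1 A2 B1 B2 :: real
  assumes "a * A1 + b * B1 = 0" "a * A2 + b * B2 = 0" "a^2 + b^2 = 1"
  shows "b * (b * A1 + - a * A2 + 0 * A3) - a * (b * B1 + - a * B2 + 0 * B3) = A1 + B2"
proof -
  have "b * (b * A1 + - a * A2 + 0 * A3) - a * (b * B1 + - a * B2 + 0 * B3)
     = (a^2 + b^2) * (A1 + B2) - a * (a * A1 + b * B1) - b * (a * A2 + b * B2)"
    by (simp add: algebra_simps power2_eq_square)
  then show ?thesis using assms by simp
qed

lemma Gset_open: "open Gset"
  unfolding Gset_def by (intro open_Collect_less) (auto intro: continuous_intros)

theorem proposition3p8:
  fixes u :: "real^3 \<Rightarrow> real" and x :: "real^3"
  assumes "regular_surface u"
    and "x \<in> Gset" and "u x = 0"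
    and "lu u x \<noteq> 0"
  shows "((\<lambda>L. HL L u x) \<longlongrightarrow>
           vfapp X1 (pbar u) x + vfapp X2 (qbar u) x - pbar u x) at_top"
proof -
  from assms(1) obtain Du :: "real^3 \<Rightarrow> ((real^3) \<Rightarrow>\<^sub>L real)"
      and D2u :: "real^3 \<Rightarrow> ((real^3) \<Rightarrow>\<^sub>L ((real^3) \<Rightarrow>\<^sub>L real))"
    where hDu: "\<And>y. y \<in> Gset \<Longrightarrow> (u has_derivative blinfun_apply (Du y)) (at y)"
      and hD2u: "\<And>y. y \<in> Gset \<Longrightarrow> (Du has_derivative blinfun_apply (D2u y)) (at y)"
    unfolding regular_surface_def C2_on_def by blast
  have fd: "frechet_derivative u (at y) = blinfun_apply (Du y)" if "y \<in> Gset" for y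
    using frechet_derivative_at[OF hDu[OF that]] by simp
  define tu where "tu = vfapp X3 u"
  have gen: "\<exists>D. ((\<lambda>y. vfapp X u y) has_derivative D) (at x)"
    if hX: "(X has_derivative X') (at x)" for X X'
  proof -
    have "((\<lambda>y. blinfun_apply (Du y) (X y)) has_derivative
        (\<lambda>h. blinfun_apply (Du x) (X' h) + blinfun_apply (D2u x h) (X x))) (at x)"
      by (rule bounded_bilinear.FDERIV[OF bounded_bilinear_blinfun_apply hD2u[OF assms(2)] hX])
    then have "((\<lambda>y. vfapp X u y) has_derivative
        (\<lambda>h. blinfun_apply (Du x) (X' h) + blinfun_apply (D2u x h) (X x))) (at x)"
      by (rule has_derivative_transform_within_open[OF _ Gset_open assms(2)])
         (simp add: vfapp_def dd_def fd)
    then show ?thesis by blast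
  qed
  obtain Dp where hp: "(pu u has_derivative Dp) (at x)"
    using gen[OF hd_X1] unfolding pu_def by (metis eta_contract_eq) 
  obtain Dq where hq: "(qu u has_derivative Dq) (at x)"
    using gen[OF hd_X2] unfolding qu_def by (metis eta_contract_eq) 
  obtain Dt where ht: "(tu has_derivative Dt) (at x)"
    using gen[OF hd_X3] unfolding tu_def by (metis eta_contract_eq) 
  have ru_eq: "ru L u y = (1 / sqrt L) * tu y" if "y \<in> Gset" for L y
    using that by (simp add: ru_def tu_def vfapp_def dd_def X3t_def fd blinfun.scaleR_right)
  have hx1: "x$1 \<noteq> 0" using assms(2) by (simp add: Gset_def)
  have p2q2: "(pu u x)^2 + (qu u x)^2 > 0"
  proof -
    have "(pu u x)^2 + (qu u x)^2 \<noteq> 0" using assms(4) by (auto simp: lu_def)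
    moreover have "(pu u x)^2 + (qu u x)^2 \<ge> 0" by simp
    ultimately show ?thesis by linarith
  qed
  have lu_fun: "lu u = (\<lambda>y. sqrt ((pu u y)^2 + (qu u y)^2))" by (simp add: fun_eq_iff lu_def)
  define Dl where "Dl = (\<lambda>h. (pu u x * Dp h + qu u x * Dq h) / lu u x)"
  have hl: "(lu u has_derivative Dl) (at x)"
    unfolding lu_fun Dl_def using hd_sqrt2[OF hp hq p2q2] by (simp add: lu_def)
  define Da where "Da = (\<lambda>h. Dp h / lu u x - pu u x * Dl h / (lu u x)^2)"
  define Db where "Db = (\<lambda>h. Dq h / lu u x - qu u x * Dl h / (lu u x)^2)"
  have ha: "(pbar u has_derivative Da) (at x)"
    using hd_div[OF hp hl assms(4)] unfolding Da_def by (simp add: pbar_def[abs_def])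
  have hb: "(qbar u has_derivative Db) (at x)"
    using hd_div[OF hq hl assms(4)] unfolding Db_def by (simp add: qbar_def[abs_def])
  have abD: "pbar u x * Da h + qbar u x * Db h = 0" for h
  proof -
    have "lu u x ^ 2 = (pu u x)^2 + (qu u x)^2" by (simp add: lu_def)
    from abD_alg[OF assms(4) this] show ?thesis
      by (simp add: pbar_def qbar_def Da_def Db_def Dl_def)
  qed
  have ab1: "(pbar u x)^2 + (qbar u x)^2 = 1"
  proof -
    have "lu u x ^ 2 = (pu u x)^2 + (qu u x)^2" by (simp add: lu_def)
    then show ?thesis using assms(4) p2q2 by (auto simp: pbar_def qbar_def power_divide add_divide_distrib[symmetric])
  qed
  obtain e where e: "e > 0" "\<And>y. dist x y < e \<Longrightarrow> lu u y \<noteq> 0"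
    using continuous_at_avoid[OF has_derivative_continuous[OF hl] assms(4)] by blast
  define S where "S = ball x e \<inter> Gset"
  have S: "open S" "x \<in> S" "\<And>y. y \<in> S \<Longrightarrow> lu u y \<noteq> 0 \<and> y $ 1 \<noteq> 0"
    using e assms(2) Gset_open by (auto simp: S_def Gset_def)
  define sL where "sL = (\<lambda>L::real. 1 / sqrt L)"
  define lL where "lL = (\<lambda>L. sqrt ((pu u x)^2 + (qu u x)^2 + (sL L * tu x)^2))"
  define DlL where "DlL = (\<lambda>L h. (pu u x * Dp h + qu u x * Dq h + sL L * tu x * (sL L * Dt h)) / lL L)"
  define DP where "DP = (\<lambda>L h. Dp h / lL L - pu u x * DlL L h / (lL L)^2)"
  define DQ where "DQ = (\<lambda>L h. Dq h / lL L - qu u x * DlL L h / (lL L)^2)"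
  define DR where "DR = (\<lambda>L h. sL L * Dt h / lL L - sL L * tu x * DlL L h / (lL L)^2)"
  define Dm where "Dm = (\<lambda>L h. Dl h / lL L - lu u x * DlL L h / (lL L)^2)"
  have lL_pos: "lL L > 0" for L
    unfolding lL_def using p2q2 by (intro real_sqrt_gt_zero) (simp add: add_pos_nonneg)
  have lLx: "lLu L u x = lL L" for L
    by (simp add: lLu_def lL_def ru_eq[OF assms(2)] sL_def)
  have hr: "(ru L u has_derivative (\<lambda>h. sL L * Dt h)) (at x)" for L
    by (rule has_derivative_transform_within_open[OF has_derivative_mult_right[OF ht] Gset_open assms(2)])
       (simp add: ru_eq sL_def)
  have hlL: "(lLu L u has_derivative DlL L) (at x)" for L
  proof -
    have "lLu L u = (\<lambda>y. sqrt ((pu u y)^2 + (qu u y)^2 + (ru L u y)^2))" by (simp add: fun_eq_iff lLu_def)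
    moreover have "(pu u x)^2 + (qu u x)^2 + (ru L u x)^2 > 0" using p2q2 by (simp add: add_pos_nonneg)
    ultimately show ?thesis using hd_sqrt3[OF hp hq hr] 
      by (simp add: DlL_def lL_def ru_eq[OF assms(2)] sL_def)
  qed
  have hP: "(pbarL L u has_derivative DP L) (at x)" for L
    using hd_div[OF hp hlL] lL_pos[of L] unfolding DP_def by (simp add: pbarL_def[abs_def] lLx)
  have hQ: "(qbarL L u has_derivative DQ L) (at x)" for L
    using hd_div[OF hq hlL] lL_pos[of L] unfolding DQ_def by (simp add: qbarL_def[abs_def] lLx)
  have hR: "(rbarL L u has_derivative DR L) (at x)" for L
    using hd_div[OF hr hlL] lL_pos[of L] unfolding DR_def by (simp add: rbarL_def[abs_def] lLx ru_eq[OF assms(2)] sL_def)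
  have hm: "((\<lambda>y. lu u y / lLu L u y) has_derivative Dm L) (at x)" for L
    using hd_div[OF hl hlL] lL_pos[of L] unfolding Dm_def by (simp add: lLx)
  have e1_eq: "e1 u = (\<lambda>y. qbar u y *\<^sub>R X1 y + (- pbar u y) *\<^sub>R X2 y + 0 *\<^sub>R X3 y)"
    by (simp add: fun_eq_iff e1_def)
  have nu_eq: "nuL L u = (\<lambda>y. pbarL L u y *\<^sub>R X1 y + qbarL L u y *\<^sub>R X2 y + (sL L * rbarL L u y) *\<^sub>R X3 y)" for L
    by (simp add: fun_eq_iff nuL_def X3t_def sL_def mult.commute)
  have e2_eq: "e2 L u = (\<lambda>y. (rbarL L u y * pbar u y) *\<^sub>R X1 y + (rbarL L u y * qbar u y) *\<^sub>R X2 y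
      + (- (lu u y / lLu L u y * sL L)) *\<^sub>R X3 y)" for L
    by (simp add: fun_eq_iff e2_def X3t_def sL_def mult.commute)
  have hma: "((\<lambda>y. - pbar u y) has_derivative (\<lambda>h. - Da h)) (at x)"
    by (rule has_derivative_minus[OF ha])
  have h0: "((\<lambda>y. 0::real) has_derivative (\<lambda>h. 0)) (at x)" by (rule has_derivative_const)
  have hsR: "((\<lambda>y. sL L * rbarL L u y) has_derivative (\<lambda>h. sL L * DR L h)) (at x)" for L
    by (rule has_derivative_mult_right[OF hR])
  have hRa: "((\<lambda>y. rbarL L u y * pbar u y) has_derivative (\<lambda>h. rbarL L u x * Da h + DR L h * pbar u x)) (at x)" for L
    by (rule has_derivative_mult[OF hR ha])
  have hRb: "((\<lambda>y. rbarL L u y * qbar u y) has_derivative (\<lambda>h. rbarL L u x * Db h + DR L h * qbar u x)) (at x)" for L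
    by (rule has_derivative_mult[OF hR hb])
  have hmv: "((\<lambda>y. - (lu u y / lLu L u y * sL L)) has_derivative (\<lambda>h. - (Dm L h * sL L))) (at x)" for L
    by (intro has_derivative_minus has_derivative_mult_left hm)
  have c1: "gfield L (e1 u) (e1 u) y = 1" if "y \<in> S" for L y
  proof -
    have y1: "y$1 \<noteq> 0" and ly: "lu u y \<noteq> 0" using S(3)[OF that] by auto
    show ?thesis unfolding gfield_def e1_eq gL_frame[OF y1]
      using ab1_gen[OF ly] by (simp add: power2_eq_square add.commute)
  qed
  have c2: "gfield L (e2 L u) (e2 L u) y = 1" if "y \<in> S" "L > 0" for L y
  proof -
    have y1: "y$1 \<noteq> 0" and ly: "lu u y \<noteq> 0" using S(3)[OF that(1)] by auto
    show ?thesis unfolding gfield_def e2_eq gL_frame[OF y1]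
      using e2_norm_gen[OF ly that(2)] by (simp add: power2_eq_square sL_def)
  qed
  have step1: "HL L u x = gL L x (lie (e1 u) (nuL L u) x) (e1 u x) + gL L x (lie (e2 L u) (nuL L u) x) (e2 L u x)"
    if "L > 0" for L
  proof -
    have z1: "frechet_derivative (gfield L (e1 u) (e1 u)) (at x) = (\<lambda>h. 0)"
      by (rule frechet_loc_const[OF S(1,2)]) (rule c1)
    have z2: "frechet_derivative (gfield L (e2 L u) (e2 L u)) (at x) = (\<lambda>h. 0)"
      by (rule frechet_loc_const[OF S(1,2)]) (rule c2[OF _ that])
    show ?thesis unfolding HL_def LC_same vfapp_def dd_def z1 z2 by simp
  qed
  define V1 where "V1 = qbar u x *\<^sub>R X1 x + (- pbar u x) *\<^sub>R X2 x + 0 *\<^sub>R X3 x"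
  define W where "W = (\<lambda>L. pbarL L u x *\<^sub>R X1 x + qbarL L u x *\<^sub>R X2 x + (sL L * rbarL L u x) *\<^sub>R X3 x)"
  define V2 where "V2 = (\<lambda>L. (rbarL L u x * pbar u x) *\<^sub>R X1 x + (rbarL L u x * qbar u x) *\<^sub>R X2 x
      + (- (lu u x / lLu L u x * sL L)) *\<^sub>R X3 x)"
  have step2: "gL L x (lie (e1 u) (nuL L u) x) (e1 u x) = qbar u x * DP L V1 - pbar u x * DQ L V1" for L
    unfolding e1_eq nu_eq lie_frame[OF hb hma h0 hP hQ hsR] gL_frame[OF hx1] V1_def
    using abD[of "W L"] unfolding W_def by (simp add: algebra_simps)
  have Lss: "L * (sL L * sL L) = 1" if "L > 0" for L
    using that by (simp add: sL_def)
  have aQ: "pbar u x * qbarL L u x = qbar u x * pbarL L u x" for L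
    by (simp add: pbar_def qbar_def pbarL_def qbarL_def)
  have step3: "gL L x (lie (e2 L u) (nuL L u) x) (e2 L u x) =
      (DP L (V2 L) - (rbarL L u x * Da (W L) + DR L (W L) * pbar u x)) * (rbarL L u x * pbar u x)
    + (DQ L (V2 L) - (rbarL L u x * Db (W L) + DR L (W L) * qbar u x)) * (rbarL L u x * qbar u x)
    - (lu u x / lLu L u x) * (DR L (V2 L) + Dm L (W L) + rbarL L u x * rbarL L u x * pbar u x
        + (lu u x / lLu L u x) * pbarL L u x)" if "L > 0" for L
    unfolding e2_eq nu_eq lie_frame[OF hRa hRb hmv hP hQ hsR] gL_frame[OF hx1] l_alg[OF Lss[OF that] aQ]
      V2_def W_def
    by simp
  have blP: "bounded_linear (DP L)" for L using has_derivative_bounded_linear[OF hP] .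
  have blQ: "bounded_linear (DQ L)" for L using has_derivative_bounded_linear[OF hQ] .
  have blR: "bounded_linear (DR L)" for L using has_derivative_bounded_linear[OF hR] .
  have blm: "bounded_linear (Dm L)" for L using has_derivative_bounded_linear[OF hm] .
  have bla: "bounded_linear Da" using has_derivative_bounded_linear[OF ha] .
  have blb: "bounded_linear Db" using has_derivative_bounded_linear[OF hb] .
  define lc where "lc = (\<lambda>c1 c2 c3 (f :: real^3 \<Rightarrow> real). c1 * f (X1 x) + c2 * f (X2 x) + c3 * f (X3 x))"
  define G where "G = (\<lambda>L. (qbar u x) * lc (qbar u x) (-(pbar u x)) 0 (DP L) - (pbar u x) * lc (qbar u x) (-(pbar u x)) 0 (DQ L)
      + (lc ((rbarL L u x)*(pbar u x)) ((rbarL L u x)*(qbar u x)) (-((lu u x / lLu L u x)*(sL L))) (DP L) - ((rbarL L u x) * lc (pbarL L u x) (qbarL L u x) ((sL L)*(rbarL L u x)) Da + lc (pbarL L u x) (qbarL L u x) ((sL L)*(rbarL L u x)) (DR L) * (pbar u x))) * ((rbarL L u x) * (pbar u x))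
      + (lc ((rbarL L u x)*(pbar u x)) ((rbarL L u x)*(qbar u x)) (-((lu u x / lLu L u x)*(sL L))) (DQ L) - ((rbarL L u x) * lc (pbarL L u x) (qbarL L u x) ((sL L)*(rbarL L u x)) Db + lc (pbarL L u x) (qbarL L u x) ((sL L)*(rbarL L u x)) (DR L) * (qbar u x))) * ((rbarL L u x) * (qbar u x))
      - (lu u x / lLu L u x) * (lc ((rbarL L u x)*(pbar u x)) ((rbarL L u x)*(qbar u x)) (-((lu u x / lLu L u x)*(sL L))) (DR L) + lc (pbarL L u x) (qbarL L u x) ((sL L)*(rbarL L u x)) (Dm L) + (rbarL L u x)*(rbarL L u x)*(pbar u x) + (lu u x / lLu L u x)*(pbarL L u x)))"
  have HG: "HL L u x = G L" if "L > 0" for L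
    unfolding step1[OF that] step2 step3[OF that] G_def V1_def V2_def W_def
      lin3[OF blP[of L]] lin3[OF blQ[of L]] lin3[OF blR[of L]] lin3[OF blm[of L]] lin3[OF bla] lin3[OF blb]
    unfolding lc_def by simp
  have ts: "((\<lambda>L. sL L) \<longlongrightarrow> 0) at_top" unfolding sL_def by (rule s_lim)
  have tlL: "((\<lambda>L. lL L) \<longlongrightarrow> lu u x) at_top"
  proof -
    have "((\<lambda>L. lL L) \<longlongrightarrow> sqrt ((pu u x)^2 + (qu u x)^2 + (0 * tu x)^2)) at_top"
      unfolding lL_def by (intro tendsto_intros ts)
    then show ?thesis by (simp add: lu_def)
  qed
  have l0: "lu u x \<noteq> 0" by (rule assms(4))
  have l02: "(lu u x)^2 \<noteq> 0" using l0 by simp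
  have tDlL: "((\<lambda>L. DlL L h) \<longlongrightarrow> Dl h) at_top" for h
  proof -
    have "((\<lambda>L. DlL L h) \<longlongrightarrow> (pu u x * Dp h + qu u x * Dq h + 0 * tu x * (0 * Dt h)) / lu u x) at_top"
      unfolding DlL_def by (intro tendsto_intros ts tlL l0)
    then show ?thesis by (simp add: Dl_def)
  qed
  have tDP: "((\<lambda>L. DP L h) \<longlongrightarrow> Da h) at_top" for h
    unfolding DP_def Da_def by (intro tendsto_intros tlL tDlL l0 l02)
  have tDQ: "((\<lambda>L. DQ L h) \<longlongrightarrow> Db h) at_top" for h
    unfolding DQ_def Db_def by (intro tendsto_intros tlL tDlL l0 l02)
  have tDR: "((\<lambda>L. DR L h) \<longlongrightarrow> 0) at_top" for h
  proof -
    have "((\<lambda>L. DR L h) \<longlongrightarrow> 0 * Dt h / lu u x - 0 * tu x * Dl h / (lu u x)^2) at_top"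
      unfolding DR_def by (intro tendsto_intros ts tlL tDlL l0 l02)
    then show ?thesis by simp
  qed
  have tDm: "((\<lambda>L. Dm L h) \<longlongrightarrow> 0) at_top" for h
  proof -
    have "((\<lambda>L. Dm L h) \<longlongrightarrow> Dl h / lu u x - lu u x * Dl h / (lu u x)^2) at_top"
      unfolding Dm_def by (intro tendsto_intros ts tlL tDlL l0 l02)
    then show ?thesis using l0 by (simp add: power2_eq_square)
  qed
  have tPv: "((\<lambda>L. pbarL L u x) \<longlongrightarrow> pbar u x) at_top"
    unfolding pbarL_def pbar_def lLx by (intro tendsto_intros tlL l0)
  have tQv: "((\<lambda>L. qbarL L u x) \<longlongrightarrow> qbar u x) at_top"
    unfolding qbarL_def qbar_def lLx by (intro tendsto_intros tlL l0)
  have tRv: "((\<lambda>L. rbarL L u x) \<longlongrightarrow> 0) at_top"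
  proof -
    have "((\<lambda>L. sL L * tu x / lL L) \<longlongrightarrow> 0 * tu x / lu u x) at_top"
      by (intro tendsto_intros tlL l0 ts)
    then show ?thesis by (simp add: rbarL_def lLx ru_eq[OF assms(2)] sL_def)
  qed
  have tmv: "((\<lambda>L. lu u x / lLu L u x) \<longlongrightarrow> 1) at_top"
  proof -
    have "((\<lambda>L. lu u x / lL L) \<longlongrightarrow> lu u x / lu u x) at_top"
      by (intro tendsto_intros tlL l0)
    then show ?thesis using l0 by (simp add: lLx)
  qed
  have tG: "(G \<longlongrightarrow> ((qbar u x) * lc (qbar u x) (-(pbar u x)) 0 Da - (pbar u x) * lc (qbar u x) (-(pbar u x)) 0 Db
      + (lc (0*(pbar u x)) (0*(qbar u x)) (-(1*0)) Da - (0 * lc (pbar u x) (qbar u x) (0*0) Da + lc (pbar u x) (qbar u x) (0*0) (\<lambda>h. 0) * (pbar u x))) * (0 * (pbar u x))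
      + (lc (0*(pbar u x)) (0*(qbar u x)) (-(1*0)) Db - (0 * lc (pbar u x) (qbar u x) (0*0) Db + lc (pbar u x) (qbar u x) (0*0) (\<lambda>h. 0) * (qbar u x))) * (0 * (qbar u x))
      - 1 * (lc (0*(pbar u x)) (0*(qbar u x)) (-(1*0)) (\<lambda>h. 0) + lc (pbar u x) (qbar u x) (0*0) (\<lambda>h. 0) + 0*0*(pbar u x) + 1*(pbar u x)))) at_top"
    unfolding G_def lc_def
    by (intro tendsto_intros tDP tDQ tDR tDm tPv tQv tRv tmv ts)
  have tv1: "vfapp X1 (pbar u) x = Da (X1 x)"
    by (simp add: vfapp_def dd_def frechet_derivative_at[OF ha, symmetric])
  have tv2: "vfapp X2 (qbar u) x = Db (X2 x)"
    by (simp add: vfapp_def dd_def frechet_derivative_at[OF hb, symmetric])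
  have tG2: "(G \<longlongrightarrow> Da (X1 x) + Db (X2 x) - pbar u x) at_top"
    using tG fin_alg[OF abD[of "X1 x"] abD[of "X2 x"] ab1] by (simp add: lc_def)
  have ev: "\<forall>\<^sub>F L in at_top. G L = HL L u x"
    unfolding eventually_at_top_linorder by (rule exI[of _ 1]) (simp add: HG)
  show ?thesis unfolding tv1 tv2 by (rule Lim_transform_eventually[OF tG2 ev])
qed

end
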